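(* Let $D=(V(D),A(D),w)$ be a weighted digraph and let $G=UG(D)$ be its weighted underlying graph. (a) Suppose $|V(D)|\ge 2$ and let $k$ be the minimum of $w(X,Y)$ over all partitions $(X,Y)$ of $V(D)$ into two nonempty parts. Then $r^+(D)+k\le \mathrm{mac}(D)$. (b) $\frac{\mathrm{mac}(G)}{2}\le \mathrm{mac}(D)\le \frac{\mathrm{mac}(G)+r^+(D)}{2}$. (c) $\frac{\mathrm{mac}(G)/2+r^+(D)}{2}\le \mathrm{mac}(D)\le \frac{\mathrm{mac}(G)+r^+(D)}{2}$. (d) Let $\chi$ be the chromatic number of $G$. If $\chi$ is even then $\left(\frac14+\frac{1}{4(\chi-1)}\right)w(D)\le \mathrm{mac}(D)$, and if $\chi$ is odd then $\left(\frac14+\frac{1}{4\chi}\right)w(D)\le\mathrm{mac}(D)$.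
   Context: A weighted digraph $D=(V(D),A(D),w)$ is a digraph without loops or parallel arcs (a pair of opposite arcs $xy,yx$ is allowed) together with a weight function $w:A(D)\to\mathbb{R}_{\ge 0}$; for a subgraph $H$, $w(H)$ is the sum of the weights of its arcs. For a partition $(X,Y)$ of $V(D)$, the directed cut (dicut) $(X,Y)$ consists of the arcs going from $X$ to $Y$, and $w(X,Y)$ is their total weight. $\mathrm{mac}(D)$ is the maximum of $w(X,Y)$ over all partitions $(X,Y)$ of $V(D)$. For a weighted undirected graph $G$, $\mathrm{mac}(G)$ is the maximum total weight of edges with one end in $X$ and the other in $Y$, over partitions $(X,Y)$ of $V(G)$. The underlying graph $UG(D)$ has vertex set $V(D)$, with $x,y$ adjacent iff there is an arc between them; the edge weight is $w(xy)$ if only $xy\in A(D)$ and $w(xy)+w(yx)$ if both $xy,yx\in A(D)$. For $v\in V(D)$, $w^+(v)$ ($w^-(v)$) is the total weight of arcs leaving (entering) $v$, $r(v)=w^+(v)-w^-(v)$, and $r^+(D)=\sum_{r(x)>0}r(x)=\frac12\sum_{x\in V(D)}|r(x)|$. *)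

theory Defs
  imports Complex_Main
begin

text \<open>A weighted digraph is given by a finite vertex set V, an arc set A \<subseteq> V \<times> V
  without loops (a set of ordered pairs, so no parallel arcs; opposite arcs allowed),
  and a weight function w on arcs with nonnegative values on A.\<close>

definition weighted_digraph :: "'a set \<Rightarrow> ('a \<times> 'a) set \<Rightarrow> ('a \<times> 'a \<Rightarrow> real) \<Rightarrow> bool" where
  "weighted_digraph V A w \<longleftrightarrow> finite V \<and> A \<subseteq> V \<times> V \<and> (\<forall>x. (x, x) \<notin> A) \<and> (\<forall>a\<in>A. 0 \<le> w a)"

definition total_weight :: "('a \<times> 'a) set \<Rightarrow> ('a \<times> 'a \<Rightarrow> real) \<Rightarrow> real" where
  "total_weight A w = (\<Sum>a\<in>A. w a)"

definition dicut_weight :: "('a \<times> 'a) set \<Rightarrow> ('a \<times> 'a \<Rightarrow> real) \<Rightarrow> 'a set \<Rightarrow> 'a set \<Rightarrow> real" where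
  "dicut_weight A w X Y = (\<Sum>a\<in>{(x, y) \<in> A. x \<in> X \<and> y \<in> Y}. w a)"

definition mac_D :: "'a set \<Rightarrow> ('a \<times> 'a) set \<Rightarrow> ('a \<times> 'a \<Rightarrow> real) \<Rightarrow> real" where
  "mac_D V A w = Max {dicut_weight A w X (V - X) | X. X \<subseteq> V}"

definition min_dicut :: "'a set \<Rightarrow> ('a \<times> 'a) set \<Rightarrow> ('a \<times> 'a \<Rightarrow> real) \<Rightarrow> real" where
  "min_dicut V A w = Min {dicut_weight A w X (V - X) | X. X \<subseteq> V \<and> X \<noteq> {} \<and> X \<noteq> V}"

definition out_weight :: "('a \<times> 'a) set \<Rightarrow> ('a \<times> 'a \<Rightarrow> real) \<Rightarrow> 'a \<Rightarrow> real" where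
  "out_weight A w v = (\<Sum>a\<in>{a \<in> A. fst a = v}. w a)"

definition in_weight :: "('a \<times> 'a) set \<Rightarrow> ('a \<times> 'a \<Rightarrow> real) \<Rightarrow> 'a \<Rightarrow> real" where
  "in_weight A w v = (\<Sum>a\<in>{a \<in> A. snd a = v}. w a)"

definition r_val :: "('a \<times> 'a) set \<Rightarrow> ('a \<times> 'a \<Rightarrow> real) \<Rightarrow> 'a \<Rightarrow> real" where
  "r_val A w v = out_weight A w v - in_weight A w v"

definition r_plus :: "'a set \<Rightarrow> ('a \<times> 'a) set \<Rightarrow> ('a \<times> 'a \<Rightarrow> real) \<Rightarrow> real" where
  "r_plus V A w = (\<Sum>v\<in>{v \<in> V. r_val A w v > 0}. r_val A w v)"

definition ug_edges :: "('a \<times> 'a) set \<Rightarrow> 'a set set" where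
  "ug_edges A = {{x, y} | x y. (x, y) \<in> A}"

definition ug_weight :: "('a \<times> 'a) set \<Rightarrow> ('a \<times> 'a \<Rightarrow> real) \<Rightarrow> 'a set \<Rightarrow> real" where
  "ug_weight A w e = (\<Sum>a\<in>{(x, y) \<in> A. {x, y} = e}. w a)"

definition ug_adj :: "('a \<times> 'a) set \<Rightarrow> 'a \<Rightarrow> 'a \<Rightarrow> bool" where
  "ug_adj A x y \<longleftrightarrow> {x, y} \<in> ug_edges A"

definition ug_cut_weight :: "'a set \<Rightarrow> ('a \<times> 'a) set \<Rightarrow> ('a \<times> 'a \<Rightarrow> real) \<Rightarrow> 'a set \<Rightarrow> real" where
  "ug_cut_weight V A w X = (\<Sum>e\<in>{e \<in> ug_edges A. e \<inter> X \<noteq> {} \<and> e \<inter> (V - X) \<noteq> {}}. ug_weight A w e)"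

definition mac_UG :: "'a set \<Rightarrow> ('a \<times> 'a) set \<Rightarrow> ('a \<times> 'a \<Rightarrow> real) \<Rightarrow> real" where
  "mac_UG V A w = Max {ug_cut_weight V A w X | X. X \<subseteq> V}"

definition proper_colouring :: "'a set \<Rightarrow> ('a \<times> 'a) set \<Rightarrow> ('a \<Rightarrow> nat) \<Rightarrow> nat \<Rightarrow> bool" where
  "proper_colouring V A c k \<longleftrightarrow> (\<forall>v\<in>V. c v < k) \<and> (\<forall>x\<in>V. \<forall>y\<in>V. ug_adj A x y \<longrightarrow> c x \<noteq> c y)"

definition chromatic_number :: "'a set \<Rightarrow> ('a \<times> 'a) set \<Rightarrow> nat" where
  "chromatic_number V A = (LEAST k. \<exists>c. proper_colouring V A c k)"

end

theory Submission
  imports Defs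
begin

lemma dicut_ind: "finite A \<Longrightarrow> dicut_weight A w X Y = (\<Sum>a\<in>A. if fst a \<in> X \<and> snd a \<in> Y then w a else 0)"
proof -
  assume f: "finite A"
  have "{(x, y) \<in> A. x \<in> X \<and> y \<in> Y} = {a\<in>A. fst a \<in> X \<and> snd a \<in> Y}" by auto
  then show ?thesis unfolding dicut_weight_def using sum.inter_filter[OF f] by simp
qed

lemma out_ind: "finite A \<Longrightarrow> out_weight A w v = (\<Sum>a\<in>A. if fst a = v then w a else 0)"
  unfolding out_weight_def by (simp add: sum.inter_filter)
lemma in_ind: "finite A \<Longrightarrow> in_weight A w v = (\<Sum>a\<in>A. if snd a = v then w a else 0)"
  unfolding in_weight_def by (simp add: sum.inter_filter)

lemma sum_r: assumes "finite A" "finite X"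
  shows "(\<Sum>x\<in>X. r_val A w x) = (\<Sum>a\<in>A. (if fst a \<in> X then w a else 0) - (if snd a \<in> X then w a else 0))"
proof -
  have "(\<Sum>x\<in>X. r_val A w x) = (\<Sum>x\<in>X. \<Sum>a\<in>A. (if fst a = x then w a else 0) - (if snd a = x then w a else 0))"
    unfolding r_val_def using assms by (simp add: out_ind in_ind sum_subtractf)
  also have "\<dots> = (\<Sum>a\<in>A. \<Sum>x\<in>X. (if fst a = x then w a else 0) - (if snd a = x then w a else 0))"
    by (rule sum.swap)
  also have "\<dots> = (\<Sum>a\<in>A. (if fst a \<in> X then w a else 0) - (if snd a \<in> X then w a else 0))"
    using assms by (simp add: sum_subtractf)
  finally show ?thesis .
qed

lemma key: assumes D: "weighted_digraph V A w" and X: "X \<subseteq> V"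
  shows "dicut_weight A w X (V - X) - dicut_weight A w (V - X) X = (\<Sum>x\<in>X. r_val A w x)"
proof -
  have fV: "finite V" and AV: "A \<subseteq> V \<times> V" using D unfolding weighted_digraph_def by auto
  have fA: "finite A" using AV fV finite_subset by blast
  have fX: "finite X" using X fV finite_subset by blast
  show ?thesis unfolding dicut_ind[OF fA] sum_r[OF fA fX] sum_subtractf[symmetric]
    apply (rule sum.cong, simp)
    using AV X by auto
qed

lemma ug_cut: assumes D: "weighted_digraph V A w" and X: "X \<subseteq> V"
  shows "ug_cut_weight V A w X = dicut_weight A w X (V - X) + dicut_weight A w (V - X) X"
proof -
  have fV: "finite V" and AV: "A \<subseteq> V \<times> V" and nl: "\<forall>x. (x,x) \<notin> A" using D unfolding weighted_digraph_def by auto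
  have fA: "finite A" using AV fV finite_subset by blast
  define cut where "cut = (\<lambda>e::'a set. e \<inter> X \<noteq> {} \<and> e \<inter> (V - X) \<noteq> {})"
  define g where "g = (\<lambda>a::'a\<times>'a. {fst a, snd a})"
  define A' where "A' = {a\<in>A. cut (g a)}"
  have fA': "finite A'" using fA unfolding A'_def by simp
  have img: "g ` A' = {e \<in> ug_edges A. cut e}"
    unfolding A'_def g_def ug_edges_def by force
  have "(\<Sum>a\<in>A'. w a) = (\<Sum>e\<in>g ` A'. \<Sum>a\<in>{x. x \<in> A' \<and> g x = e}. w a)"
    by (rule sum.image_gen[OF fA'])
  also have "\<dots> = ug_cut_weight V A w X"
    unfolding ug_cut_weight_def img cut_def
  proof (rule sum.cong, simp)
    fix e assume "e \<in> {e \<in> ug_edges A. e \<inter> X \<noteq> {} \<and> e \<inter> (V - X) \<noteq> {}}"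
    then have "{x. x \<in> A' \<and> g x = e} = {(x, y) \<in> A. {x, y} = e}"
      unfolding A'_def g_def cut_def by auto
    then show "(\<Sum>a\<in>{x. x \<in> A' \<and> g x = e}. w a) = ug_weight A w e"
      unfolding ug_weight_def by simp
  qed
  finally have 1: "ug_cut_weight V A w X = (\<Sum>a\<in>A. if cut (g a) then w a else 0)"
    unfolding A'_def using sum.inter_filter[OF fA, of w "\<lambda>a. cut (g a)"] by simp
  show ?thesis unfolding 1 dicut_ind[OF fA] sum.distrib[symmetric]
  proof (rule sum.cong, simp)
    fix a assume a: "a \<in> A"
    then have "fst a \<in> V" "snd a \<in> V" using AV by auto
    then show "(if cut (g a) then w a else 0) = (if fst a \<in> X \<and> snd a \<in> V - X then w a else 0) +
         (if fst a \<in> V - X \<and> snd a \<in> X then w a else 0)"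
      unfolding cut_def g_def by auto
  qed
qed

lemma dicut_nonneg: "weighted_digraph V A w \<Longrightarrow> 0 \<le> dicut_weight A w X Y"
  unfolding dicut_weight_def weighted_digraph_def by (intro sum_nonneg) auto

lemma mac_set: "{dicut_weight A w X (V - X) | X. X \<subseteq> V} = (\<lambda>X. dicut_weight A w X (V - X)) ` Pow V"
  by auto
lemma ug_set: "{ug_cut_weight V A w X | X. X \<subseteq> V} = (\<lambda>X. ug_cut_weight V A w X) ` Pow V"
  by auto

lemma mac_ge: assumes "weighted_digraph V A w" "X \<subseteq> V"
  shows "dicut_weight A w X (V - X) \<le> mac_D V A w"
proof -
  have "finite V" using assms unfolding weighted_digraph_def by auto
  then show ?thesis unfolding mac_D_def mac_set using assms(2) by (intro Max_ge) auto
qed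

lemma mac_in: assumes "weighted_digraph V A w"
  shows "\<exists>X\<subseteq>V. mac_D V A w = dicut_weight A w X (V - X)"
proof -
  have "finite V" using assms unfolding weighted_digraph_def by auto
  then have "mac_D V A w \<in> (\<lambda>X. dicut_weight A w X (V - X)) ` Pow V"
    unfolding mac_D_def mac_set by (intro Max_in) auto
  then show ?thesis by auto
qed

lemma ug_in: assumes "weighted_digraph V A w"
  shows "\<exists>X\<subseteq>V. mac_UG V A w = ug_cut_weight V A w X"
proof -
  have "finite V" using assms unfolding weighted_digraph_def by auto
  then have "mac_UG V A w \<in> (\<lambda>X. ug_cut_weight V A w X) ` Pow V"
    unfolding mac_UG_def ug_set by (intro Max_in) auto
  then show ?thesis by auto
qed

lemma ug_ge: assumes "weighted_digraph V A w" "X \<subseteq> V"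
  shows "ug_cut_weight V A w X \<le> mac_UG V A w"
proof -
  have "finite V" using assms unfolding weighted_digraph_def by auto
  then show ?thesis unfolding mac_UG_def ug_set using assms(2) by (intro Max_ge) auto
qed

lemma rplus_ge: assumes "weighted_digraph V A w" "X \<subseteq> V"
  shows "(\<Sum>x\<in>X. r_val A w x) \<le> r_plus V A w"
proof -
  have fV: "finite V" using assms unfolding weighted_digraph_def by auto
  let ?P = "{v \<in> V. r_val A w v > 0}"
  have fX: "finite X" using fV assms(2) finite_subset by blast
  have "(\<Sum>x\<in>X. r_val A w x) = (\<Sum>x\<in>X \<inter> ?P. r_val A w x) + (\<Sum>x\<in>X - ?P. r_val A w x)"
    using fX by (metis (no_types, lifting) Diff_Int2 Int_absorb Un_Diff_Int inf_commute sum.union_inter_neutral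
        Diff_Diff_Int finite_Int sum.subset_diff Int_lower1)
  also have "(\<Sum>x\<in>X - ?P. r_val A w x) \<le> 0" using assms(2) by (intro sum_nonpos) auto
  also have "(\<Sum>x\<in>X \<inter> ?P. r_val A w x) \<le> (\<Sum>x\<in>?P. r_val A w x)"
    using fV by (intro sum_mono2) auto
  finally show ?thesis unfolding r_plus_def by simp
qed

lemma rplus_eq: assumes "weighted_digraph V A w"
  shows "r_plus V A w = dicut_weight A w {v \<in> V. r_val A w v > 0} (V - {v \<in> V. r_val A w v > 0})
     - dicut_weight A w (V - {v \<in> V. r_val A w v > 0}) {v \<in> V. r_val A w v > 0}"
  unfolding r_plus_def by (subst key[OF assms]) auto

lemma count_sub: assumes "i < n" "j < n" "i \<noteq> j" "1 \<le> m"
  shows "card {S. S \<subseteq> {0..<n} \<and> card S = m \<and> i \<in> S \<and> j \<notin> S} = (n - 2) choose (m - 1)"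
proof -
  let ?T = "{T. T \<subseteq> {0..<n} - {i, j} \<and> card T = m - 1}"
  have eq: "{S. S \<subseteq> {0..<n} \<and> card S = m \<and> i \<in> S \<and> j \<notin> S} = insert i ` ?T"
  proof (rule set_eqI, rule iffI)
    fix S assume S: "S \<in> {S. S \<subseteq> {0..<n} \<and> card S = m \<and> i \<in> S \<and> j \<notin> S}"
    then have "finite S" using finite_subset by blast
    then have "S - {i} \<in> ?T" using S by auto
    moreover have "S = insert i (S - {i})" using S by auto
    ultimately show "S \<in> insert i ` ?T" by blast
  next
    fix S assume "S \<in> insert i ` ?T"
    then obtain T where T: "T \<in> ?T" "S = insert i T" by blast
    have "finite T" using T finite_subset by blast
    moreover have "i \<notin> T" using T by auto
    ultimately have "card S = m" using T assms by simp
    then show "S \<in> {S. S \<subseteq> {0..<n} \<and> card S = m \<and> i \<in> S \<and> j \<notin> S}" using T assms by auto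
  qed
  have inj: "inj_on (insert i) ?T"
    by (rule inj_onI) (metis (no_types, lifting) Diff_iff insert_absorb insert_ident insertCI mem_Collect_eq subsetD)
  have "card ({0..<n} - {i, j}) = n - 2" using assms by (simp add: card_Diff_subset)
  then show ?thesis unfolding eq card_image[OF inj] by (simp add: n_subsets)
qed

lemma d_core: assumes D: "weighted_digraph V A w" and c: "\<forall>v\<in>V. c v < n"
  and pr: "\<forall>a\<in>A. c (fst a) \<noteq> c (snd a)" and m: "1 \<le> m" "m < n"
  shows "real ((n-2) choose (m-1)) * total_weight A w \<le> real (n choose m) * mac_D V A w"
proof -
  have fV: "finite V" and AV: "A \<subseteq> V \<times> V" using D unfolding weighted_digraph_def by auto
  have fA: "finite A" using AV fV finite_subset by blast
  define SS where "SS = {S. S \<subseteq> {0..<n} \<and> card S = m}"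
  have fSS: "finite SS" unfolding SS_def by simp
  have cSS: "card SS = n choose m" unfolding SS_def by (simp add: n_subsets)
  define X where "X = (\<lambda>S. {v\<in>V. c v \<in> S})"
  define f where "f = (\<lambda>S a. (if c (fst a) \<in> S \<and> c (snd a) \<notin> S then w a else 0)
       + (if c (snd a) \<in> S \<and> c (fst a) \<notin> S then w a else (0::real)))"
  have two: "dicut_weight A w (X S) (V - X S) + dicut_weight A w (V - X S) (X S) = (\<Sum>a\<in>A. f S a)" for S
    unfolding dicut_ind[OF fA] sum.distrib[symmetric]
  proof (rule sum.cong, simp)
    fix a assume "a \<in> A"
    then have "fst a \<in> V" "snd a \<in> V" using AV by auto
    then show "(if fst a \<in> X S \<and> snd a \<in> V - X S then w a else 0) +
         (if fst a \<in> V - X S \<and> snd a \<in> X S then w a else 0) = f S a"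
      unfolding f_def X_def by auto
  qed
  have le: "(\<Sum>a\<in>A. f S a) \<le> 2 * mac_D V A w" for S
  proof -
    have "X S \<subseteq> V" "V - X S \<subseteq> V" unfolding X_def by auto
    moreover have "V - (V - X S) = X S" unfolding X_def by auto
    ultimately show ?thesis unfolding two[symmetric] using mac_ge[OF D, of "X S"] mac_ge[OF D, of "V - X S"] by simp
  qed
  have "(\<Sum>S\<in>SS. \<Sum>a\<in>A. f S a) \<le> (\<Sum>S\<in>SS. 2 * mac_D V A w)"
    by (rule sum_mono) (rule le)
  also have "\<dots> = real (n choose m) * (2 * mac_D V A w)" using cSS by simp
  finally have up: "(\<Sum>a\<in>A. \<Sum>S\<in>SS. f S a) \<le> real (n choose m) * (2 * mac_D V A w)"
    using sum.swap[of f A SS] by simp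
  have cnt: "(\<Sum>S\<in>SS. f S a) = 2 * real ((n-2) choose (m-1)) * w a" if a: "a \<in> A" for a
  proof -
    let ?i = "c (fst a)" and ?j = "c (snd a)"
    have ij: "?i < n" "?j < n" "?i \<noteq> ?j" using a AV c pr by auto
    have e1: "(\<Sum>S\<in>SS. if ?i \<in> S \<and> ?j \<notin> S then w a else 0) = real ((n-2) choose (m-1)) * w a"
    proof -
      have "(\<Sum>S\<in>SS. if ?i \<in> S \<and> ?j \<notin> S then w a else 0) = (\<Sum>S\<in>{S\<in>SS. ?i \<in> S \<and> ?j \<notin> S}. w a)"
        using sum.inter_filter[OF fSS, of "\<lambda>_. w a" "\<lambda>S. ?i \<in> S \<and> ?j \<notin> S"] by simp
      also have "{S\<in>SS. ?i \<in> S \<and> ?j \<notin> S} = {S. S \<subseteq> {0..<n} \<and> card S = m \<and> ?i \<in> S \<and> ?j \<notin> S}"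
        unfolding SS_def by auto
      finally show ?thesis using count_sub[of ?i n ?j m] ij m by simp
    qed
    have e2: "(\<Sum>S\<in>SS. if ?j \<in> S \<and> ?i \<notin> S then w a else 0) = real ((n-2) choose (m-1)) * w a"
    proof -
      have "(\<Sum>S\<in>SS. if ?j \<in> S \<and> ?i \<notin> S then w a else 0) = (\<Sum>S\<in>{S\<in>SS. ?j \<in> S \<and> ?i \<notin> S}. w a)"
        using sum.inter_filter[OF fSS, of "\<lambda>_. w a" "\<lambda>S. ?j \<in> S \<and> ?i \<notin> S"] by simp
      also have "{S\<in>SS. ?j \<in> S \<and> ?i \<notin> S} = {S. S \<subseteq> {0..<n} \<and> card S = m \<and> ?j \<in> S \<and> ?i \<notin> S}"
        unfolding SS_def by auto
      finally show ?thesis using count_sub[of ?j n ?i m] ij m by simp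
    qed
    show ?thesis unfolding f_def sum.distrib e1 e2 by simp
  qed
  have "(\<Sum>a\<in>A. \<Sum>S\<in>SS. f S a) = (\<Sum>a\<in>A. 2 * real ((n-2) choose (m-1)) * w a)"
    by (rule sum.cong) (auto simp: cnt)
  also have "\<dots> = 2 * real ((n-2) choose (m-1)) * total_weight A w"
    unfolding total_weight_def by (simp add: sum_distrib_left)
  finally show ?thesis using up by simp
qed

lemma binom_id: assumes "1 \<le> m" "m < n"
  shows "m * (n - m) * (n choose m) = n * (n - 1) * ((n - 2) choose (m - 1))"
proof -
  obtain k where k: "m = Suc k" using assms(1) by (cases m) auto
  have 1: "Suc k * (n choose Suc k) = n * ((n - 1) choose k)" by (rule binomial_absorption)
  have 2: "((n - 1) - k) * ((n - 1) choose k) = (n - 1) * ((n - 1 - 1) choose k)" by (rule binomial_absorb_comp)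
  have 3: "n - m = (n - 1) - k" using k by simp
  have "m * (n - m) * (n choose m) = (n - m) * (Suc k * (n choose Suc k))" using k by (simp only: mult.assoc mult.commute mult.left_commute)
  also have "\<dots> = n * (((n - 1) - k) * ((n - 1) choose k))" unfolding 1 3 by simp
  also have "\<dots> = n * (n - 1) * ((n - 2) choose (m - 1))" unfolding 2 using k by (simp add: numeral_2_eq_2)
  finally show ?thesis .
qed

lemma fin_arith: fixes C2 Cn W M a b :: real
  assumes "C2*W \<le> Cn*M" "a * Cn = b * C2" "Cn > 0" "b > 0"
  shows "(a/b) * W \<le> M"
proof -
  have "C2 = a * Cn / b" using assms by (simp add: field_simps)
  then have "Cn * ((a/b) * W) = C2 * W" by simp
  then have "Cn * ((a/b) * W) \<le> Cn * M" using assms by simp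
  then show ?thesis using assms(3) mult_le_cancel_left_pos by blast
qed

lemma chi_bound: assumes D: "weighted_digraph V A w" and c: "\<forall>v\<in>V. c v < n"
  and pr: "\<forall>a\<in>A. c (fst a) \<noteq> c (snd a)" and m: "1 \<le> m" "m < n"
  shows "(real (m * (n - m)) / real (n * (n - 1))) * total_weight A w \<le> mac_D V A w"
proof (rule fin_arith)
  show "real ((n-2) choose (m-1)) * total_weight A w \<le> real (n choose m) * mac_D V A w"
    by (rule d_core[OF D c pr m])
  show "real (m * (n - m)) * real (n choose m) = real (n * (n - 1)) * real ((n-2) choose (m-1))"
    using binom_id[OF m] by (metis of_nat_mult)
  show "real (n choose m) > 0" using m by simp
  show "real (n * (n - 1)) > 0" using m by simp
qed

theorem mainTheorem1:
  fixes V :: "'a set" and A :: "('a \<times> 'a) set" and w :: "'a \<times> 'a \<Rightarrow> real"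
  assumes D: "weighted_digraph V A w"
  shows "(card V \<ge> 2 \<longrightarrow> r_plus V A w + min_dicut V A w \<le> mac_D V A w)
    \<and> (mac_UG V A w / 2 \<le> mac_D V A w \<and> mac_D V A w \<le> (mac_UG V A w + r_plus V A w) / 2)
    \<and> ((mac_UG V A w / 2 + r_plus V A w) / 2 \<le> mac_D V A w
        \<and> mac_D V A w \<le> (mac_UG V A w + r_plus V A w) / 2)
    \<and> (even (chromatic_number V A) \<longrightarrow>
         (1/4 + 1 / (4 * (real (chromatic_number V A) - 1))) * total_weight A w \<le> mac_D V A w)
    \<and> (odd (chromatic_number V A) \<longrightarrow>
         (1/4 + 1 / (4 * real (chromatic_number V A))) * total_weight A w \<le> mac_D V A w)"
proof -
  have fV: "finite V" and AV: "A \<subseteq> V \<times> V" and nl: "\<forall>x. (x,x) \<notin> A"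
    using D unfolding weighted_digraph_def by auto
  have fA: "finite A" using AV fV finite_subset by blast
  have mac0: "0 \<le> mac_D V A w" using mac_ge[OF D, of "{}"] dicut_nonneg[OF D, of "{}" "V"] by simp
  define P where "P = {v \<in> V. r_val A w v > 0}"
  have PV: "P \<subseteq> V" unfolding P_def by auto
  have rp: "r_plus V A w = dicut_weight A w P (V - P) - dicut_weight A w (V - P) P"
    using rplus_eq[OF D] unfolding P_def .
  have rp_le: "r_plus V A w \<le> mac_D V A w"
    using rp mac_ge[OF D PV] dicut_nonneg[OF D, of "V - P" P] by simp
  have pa: "card V \<ge> 2 \<longrightarrow> r_plus V A w + min_dicut V A w \<le> mac_D V A w"
  proof
    assume cV: "card V \<ge> 2"
    have mset: "{dicut_weight A w X (V - X) | X. X \<subseteq> V \<and> X \<noteq> {} \<and> X \<noteq> V} \<subseteq> (\<lambda>X. dicut_weight A w X (V - X)) ` Pow V"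
      by auto
    have fin: "finite {dicut_weight A w X (V - X) | X. X \<subseteq> V \<and> X \<noteq> {} \<and> X \<noteq> V}"
      using fV by (intro finite_subset[OF mset]) simp
    have mle: "min_dicut V A w \<le> dicut_weight A w X (V - X)" if "X \<subseteq> V" "X \<noteq> {}" "X \<noteq> V" for X
      unfolding min_dicut_def using that fin by (intro Min_le) auto
    show "r_plus V A w + min_dicut V A w \<le> mac_D V A w"
    proof (cases "P = {}")
      case True
      then have r0: "r_plus V A w = 0" unfolding r_plus_def P_def[symmetric] by simp
      obtain x where x: "x \<in> V" using cV by fastforce
      have "{x} \<noteq> V" using cV x by (metis card.empty card_insert_disjoint empty_iff finite.emptyI numeral_le_one_iff semiring_norm(69) One_nat_def)
      then have "min_dicut V A w \<le> dicut_weight A w {x} (V - {x})" using x mle[of "{x}"] by auto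
      also have "\<dots> \<le> mac_D V A w" using mac_ge[OF D, of "{x}"] x by auto
      finally show ?thesis using r0 by simp
    next
      case False
      show ?thesis
      proof (cases "P = V")
        case True
        have "r_plus V A w = 0" using rp True unfolding dicut_weight_def by simp
        moreover have "r_plus V A w > 0" unfolding r_plus_def P_def[symmetric]
          using False fV PV by (intro sum_pos) (auto simp: P_def intro: finite_subset)
        ultimately show ?thesis by simp
      next
        case PnV: False
        have "min_dicut V A w \<le> dicut_weight A w (V - P) (V - (V - P))"
          using False PnV PV by (intro mle) auto
        moreover have "V - (V - P) = P" using PV by auto
        ultimately show ?thesis using rp mac_ge[OF D PV] by simp
      qed
    qed
  qed
  obtain X0 where X0: "X0 \<subseteq> V" "mac_UG V A w = ug_cut_weight V A w X0" using ug_in[OF D] by blast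
  have "V - (V - X0) = X0" using X0 by auto
  then have "mac_UG V A w = dicut_weight A w X0 (V - X0) + dicut_weight A w (V - X0) (V - (V - X0))"
    using X0 ug_cut[OF D X0(1)] by simp
  then have lb: "mac_UG V A w / 2 \<le> mac_D V A w"
    using mac_ge[OF D X0(1)] mac_ge[OF D, of "V - X0"] by auto
  obtain X1 where X1: "X1 \<subseteq> V" "mac_D V A w = dicut_weight A w X1 (V - X1)" using mac_in[OF D] by blast
  have ub: "mac_D V A w \<le> (mac_UG V A w + r_plus V A w) / 2"
    using key[OF D X1(1)] rplus_ge[OF D X1(1)] ug_cut[OF D X1(1)] ug_ge[OF D X1(1)] X1(2) by simp
  have lc: "(mac_UG V A w / 2 + r_plus V A w) / 2 \<le> mac_D V A w" using lb rp_le by simp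
  define n where "n = chromatic_number V A"
  have adj_ne: "x \<noteq> y" if "ug_adj A x y" for x y
  proof
    assume "x = y"
    then show False using that nl unfolding ug_adj_def ug_edges_def by (auto simp: doubleton_eq_iff)
  qed
  obtain h where h: "bij_betw h V {0..<card V}" using ex_bij_betw_finite_nat[OF fV] by blast
  have "proper_colouring V A h (card V)"
    unfolding proper_colouring_def
  proof (intro conjI ballI impI)
    fix v assume "v \<in> V" then show "h v < card V" using h bij_betwE by fastforce
  next
    fix x y assume "x \<in> V" "y \<in> V" "ug_adj A x y"
    then show "h x \<noteq> h y" using adj_ne h unfolding bij_betw_def inj_on_def by blast
  qed
  then have "\<exists>c. proper_colouring V A c (card V)" by blast
  then have "\<exists>c. proper_colouring V A c (LEAST k. \<exists>c. proper_colouring V A c k)"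
    by (rule LeastI)
  then obtain c where c: "proper_colouring V A c n"
    unfolding n_def chromatic_number_def by blast
  have cV: "\<forall>v\<in>V. c v < n" using c unfolding proper_colouring_def by auto
  have pr: "\<forall>a\<in>A. c (fst a) \<noteq> c (snd a)"
  proof
    fix a assume a: "a \<in> A"
    then have "ug_adj A (fst a) (snd a)" unfolding ug_adj_def ug_edges_def by (cases a) auto
    moreover have "fst a \<in> V" "snd a \<in> V" using a AV by auto
    ultimately show "c (fst a) \<noteq> c (snd a)" using c unfolding proper_colouring_def by blast
  qed
  have pd: "(even n \<longrightarrow> (1/4 + 1 / (4 * (real n - 1))) * total_weight A w \<le> mac_D V A w)
    \<and> (odd n \<longrightarrow> (1/4 + 1 / (4 * real n)) * total_weight A w \<le> mac_D V A w)"
  proof (cases "A = {}")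
    case True
    then show ?thesis using mac0 unfolding total_weight_def by simp
  next
    case False
    then obtain a where a: "a \<in> A" by blast
    then have "c (fst a) < n" "c (snd a) < n" "c (fst a) \<noteq> c (snd a)" using cV pr AV by auto
    then have n2: "n \<ge> 2" by linarith
    show ?thesis
    proof (intro conjI impI)
      assume "even n"
      then obtain k where k: "n = 2 * k" by blast
      have "1 \<le> k" "k < n" using k n2 by auto
      from chi_bound[OF D cV pr this]
      have "(real (k * (n - k)) / real (n * (n - 1))) * total_weight A w \<le> mac_D V A w" .
      moreover have "real (k * (n - k)) / real (n * (n - 1)) = 1/4 + 1 / (4 * (real n - 1))"
        using k n2 by (simp add: of_nat_diff field_simps)
      ultimately show "(1/4 + 1 / (4 * (real n - 1))) * total_weight A w \<le> mac_D V A w" by metis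
    next
      assume "odd n"
      then obtain k where k: "n = 2 * k + 1" using oddE by blast
      have "1 \<le> k" "k < n" using k n2 by auto
      from chi_bound[OF D cV pr this]
      have "(real (k * (n - k)) / real (n * (n - 1))) * total_weight A w \<le> mac_D V A w" .
      moreover have "real (k * (n - k)) / real (n * (n - 1)) = 1/4 + 1 / (4 * real n)"
      proof -
        have e1: "real (k * (n - k)) = real k * (real k + 1)" using k by (simp add: algebra_simps)
        have e2: "real (n * (n - 1)) = (2 * real k + 1) * (2 * real k)" using k by (simp add: algebra_simps)
        have e3: "real n = 2 * real k + 1" using k by simp
        have kp: "real k > 0" using \<open>1 \<le> k\<close> by simp
        have n1: "(2 * real k + 1) * (2 * real k) \<noteq> 0" "4 * (2 * real k + 1) \<noteq> 0" using kp by auto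
        show ?thesis unfolding e1 e2 e3 using n1 by (simp add: divide_simps) (simp add: algebra_simps)
      qed
      ultimately show "(1/4 + 1 / (4 * real n)) * total_weight A w \<le> mac_D V A w" by metis
    qed
  qed
  show ?thesis using pa lb ub lc pd unfolding n_def by blast
qed

end
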